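(* With the notation below, let $I_n=\langle x_1,\ldots,x_n\rangle\subseteq S$. Then $H_0(\mathcal{FK}_\bullet(x_1,\ldots,x_n))\cong S/I_n$ as left $S[\Theta;\varphi]$-modules, and $H_{n+1}(\mathcal{FK}_\bullet(x_1,\ldots,x_n))=0$ (i.e. $\partial_{n+1}$ is injective).
   Context: Let $\mathbb{K}$ be a commutative ring and $S=\mathbb{K}[x_1,\ldots,x_n]$. Let $\varphi:S\to S$ be a flat $\mathbb{K}$-algebra endomorphism with $\varphi(x_i)\in\langle x_i\rangle$ for each $i$, and fix nonzero $s_1,\ldots,s_n\in S$ with $\varphi(x_i)=s_ix_i$. The left skew polynomial ring $S[\Theta;\varphi]$ is the ring which is a free left $S$-module with basis $\{\Theta^i\}_{i\geq0}$ and multiplication determined by $\Theta a=\varphi(a)\Theta$ for $a\in S$. $S/I_n$ is a left $S[\Theta;\varphi]$-module with $S$ acting naturally and $\Theta$ acting by the map induced by $\varphi$ (well defined since $\varphi(I_n)\subseteq I_n$). For $J=\{j_1<\cdots<j_k\}\subseteq\{1,\ldots,n\}$ write $s_J=s_{j_1}\cdots s_{j_k}$ (with $s_\emptyset=1$) and $\mathbf{e}_J=\mathbf{e}_{j_1}\wedge\cdots\wedge\mathbf{e}_{j_k}$. The $\varphi$-Koszul complex $\mathcal{FK}_\bullet(x_1,\ldots,x_n)$ is defined as follows: for $0\leq l\leq n+1$, $\mathcal{FK}_l$ is the free left $S[\Theta;\varphi]$-module with basis $\{\mathbf{e}_I : |I|=l\}\cup\{\mathbf{e}_J\wedge u : |J|=l-1\}$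 (so $\mathcal{FK}_0=S[\Theta;\varphi]$ with basis $\mathbf{e}_\emptyset$, and $\mathcal{FK}_{n+1}$ has the single basis element $\mathbf{e}_{\{1,\ldots,n\}}\wedge u$), and $\partial_l:\mathcal{FK}_l\to\mathcal{FK}_{l-1}$ ($1\le l\le n+1$; $\partial_0=\partial_{n+2}=0$) is the left $S[\Theta;\varphi]$-linear map given on basis elements by $\partial_l(\mathbf{e}_I)=\sum_{r=1}^{l}(-1)^{r-1}x_{i_r}\,\mathbf{e}_{I\setminus\{i_r\}}$ for $I=\{i_1<\cdots<i_l\}$, and $\partial_l(\mathbf{e}_J\wedge u)=(-1)^{l-1}(\Theta-s_J)\,\mathbf{e}_J+\sum_{r=1}^{l-1}(-1)^{r-1}\varphi(x_{j_r})\,\mathbf{e}_{J\setminus\{j_r\}}\wedge u$ for $J=\{j_1<\cdots<j_{l-1}\}$ (in particular $\partial_1(u)=\Theta-1$). Homology is $H_l=\ker\partial_l/\operatorname{im}\partial_{l+1}$. *)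

theory Defs
  imports "HOL-Library.Poly_Mapping" "HOL-Library.Function_Algebras"
begin

text \<open>The polynomial ring S = K[x_v : v in 'v], where the variables are indexed by a
  finite linearly ordered type 'v (so n = CARD('v) and the order of 'v plays the role
  of the order 1 < 2 < ... < n).\<close>

type_synonym ('v, 'k) mpoly = "('v \<Rightarrow>\<^sub>0 nat) \<Rightarrow>\<^sub>0 'k"

definition Var :: "'v \<Rightarrow> ('v, 'k::comm_ring_1) mpoly" where
  "Var v = Poly_Mapping.single (Poly_Mapping.single v 1) 1"

definition Const :: "'k \<Rightarrow> ('v, 'k::comm_ring_1) mpoly" where
  "Const c = Poly_Mapping.single 0 c"

definition var_ideal :: "('v::finite, 'k::comm_ring_1) mpoly set" where
  "var_ideal = {p. \<exists>a. p = (\<Sum>v\<in>UNIV. a v * Var v)}"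

definition alg_endo :: "(('v, 'k::comm_ring_1) mpoly \<Rightarrow> ('v, 'k) mpoly) \<Rightarrow> bool" where
  "alg_endo \<phi> \<longleftrightarrow> (\<forall>p q. \<phi> (p + q) = \<phi> p + \<phi> q) \<and> (\<forall>p q. \<phi> (p * q) = \<phi> p * \<phi> q)
     \<and> \<phi> 1 = 1 \<and> (\<forall>c. \<phi> (Const c) = Const c)"

text \<open>Flatness of \<phi>: S regarded as a module over itself via \<phi> (r . m = \<phi> r * m)
  is flat.  Expressed by the equational criterion of flatness (Stacks 00HK), since
  tensor products are not available in the library.\<close>
definition flat_endo :: "(('v, 'k::comm_ring_1) mpoly \<Rightarrow> ('v, 'k) mpoly) \<Rightarrow> bool" where
  "flat_endo \<phi> \<longleftrightarrow>
    (\<forall>(k::nat) (a::nat \<Rightarrow> ('v,'k) mpoly) (m::nat \<Rightarrow> ('v,'k) mpoly).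
       (\<Sum>i<k. \<phi> (a i) * m i) = 0 \<longrightarrow>
       (\<exists>(l::nat) (b::nat \<Rightarrow> nat \<Rightarrow> ('v,'k) mpoly) (y::nat \<Rightarrow> ('v,'k) mpoly).
          (\<forall>i<k. m i = (\<Sum>j<l. \<phi> (b i j) * y j)) \<and>
          (\<forall>j<l. (\<Sum>i<k. a i * b i j) = 0)))"

text \<open>The left skew polynomial ring S[\<Theta>;\<phi>]: an element is a finitely supported
  sequence of coefficients f, standing for sum_i f_i \<Theta>^i.
  Multiplication: (a \<Theta>^i)(b \<Theta>^j) = a \<phi>^i(b) \<Theta>^(i+j).\<close>
type_synonym ('v, 'k) skew = "nat \<Rightarrow>\<^sub>0 ('v, 'k) mpoly"

definition skew_mult :: "(('v, 'k::comm_ring_1) mpoly \<Rightarrow> ('v, 'k) mpoly) \<Rightarrow>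
    ('v, 'k) skew \<Rightarrow> ('v, 'k) skew \<Rightarrow> ('v, 'k) skew" where
  "skew_mult \<phi> f g = Abs_poly_mapping
     (\<lambda>k. \<Sum>i\<le>k. Poly_Mapping.lookup f i * (\<phi> ^^ i) (Poly_Mapping.lookup g (k - i)))"

definition skew_const :: "('v, 'k::comm_ring_1) mpoly \<Rightarrow> ('v, 'k) skew" where
  "skew_const a = Poly_Mapping.single 0 a"

definition Theta :: "('v, 'k::comm_ring_1) skew" where
  "Theta = Poly_Mapping.single 1 1"

definition S_act :: "(('v, 'k::comm_ring_1) mpoly \<Rightarrow> ('v, 'k) mpoly) \<Rightarrow>
    ('v, 'k) skew \<Rightarrow> ('v, 'k) mpoly \<Rightarrow> ('v, 'k) mpoly" where
  "S_act \<phi> r p = (\<Sum>i\<in>Poly_Mapping.keys r. Poly_Mapping.lookup r i * (\<phi> ^^ i) p)"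

text \<open>All modules FK_l are collected in one free module with
  basis indexed by pairs (J, b): (I, False) stands for e_I and (J, True) for e_J \<and> u.\<close>
type_synonym ('v, 'k) chain = "'v set \<times> bool \<Rightarrow> ('v, 'k) skew"

definition bdeg :: "'v set \<times> bool \<Rightarrow> nat" where
  "bdeg ix = card (fst ix) + (if snd ix then 1 else 0)"

definition FK :: "nat \<Rightarrow> ('v::finite, 'k::comm_ring_1) chain set" where
  "FK l = {c. \<forall>ix. c ix \<noteq> 0 \<longrightarrow> bdeg ix = l}"

definition chain_smul :: "(('v, 'k::comm_ring_1) mpoly \<Rightarrow> ('v, 'k) mpoly) \<Rightarrow>
    ('v, 'k) skew \<Rightarrow> ('v, 'k) chain \<Rightarrow> ('v, 'k) chain" where
  "chain_smul \<phi> r c = (\<lambda>ix. skew_mult \<phi> r (c ix))"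

definition basis_vec :: "'v set \<times> bool \<Rightarrow> ('v, 'k::comm_ring_1) chain" where
  "basis_vec ix = (\<lambda>jx. if jx = ix then skew_const 1 else 0)"

definition sgn_pos :: "'v::linorder set \<Rightarrow> 'v \<Rightarrow> ('v, 'k::comm_ring_1) mpoly" where
  "sgn_pos I i = (-1) ^ card {j\<in>I. j < i}"

definition s_prod :: "('v \<Rightarrow> ('v, 'k::comm_ring_1) mpoly) \<Rightarrow> 'v set \<Rightarrow> ('v, 'k) mpoly" where
  "s_prod s J = (\<Prod>j\<in>J. s j)"

definition bd_basis :: "(('v::{finite,linorder}, 'k::comm_ring_1) mpoly \<Rightarrow> ('v, 'k) mpoly) \<Rightarrow>
    ('v \<Rightarrow> ('v, 'k) mpoly) \<Rightarrow> 'v set \<times> bool \<Rightarrow> ('v, 'k) chain" where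
  "bd_basis \<phi> s ix =
    (if \<not> snd ix then
       (\<Sum>i\<in>fst ix. chain_smul \<phi> (skew_const (sgn_pos (fst ix) i * Var i))
                        (basis_vec (fst ix - {i}, False)))
     else
       chain_smul \<phi> (skew_mult \<phi> (skew_const ((-1) ^ card (fst ix))) (Theta - skew_const (s_prod s (fst ix))))
                    (basis_vec (fst ix, False))
       + (\<Sum>j\<in>fst ix. chain_smul \<phi> (skew_const (sgn_pos (fst ix) j * \<phi> (Var j)))
                        (basis_vec (fst ix - {j}, True))))"

text \<open>The differential, extended S[\<Theta>;\<phi>]-linearly.  Its restriction to FK l is \<partial>_l.\<close>
definition bd :: "(('v::{finite,linorder}, 'k::comm_ring_1) mpoly \<Rightarrow> ('v, 'k) mpoly) \<Rightarrow>
    ('v \<Rightarrow> ('v, 'k) mpoly) \<Rightarrow> ('v, 'k) chain \<Rightarrow> ('v, 'k) chain" where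
  "bd \<phi> s c = (\<Sum>ix\<in>UNIV. chain_smul \<phi> (c ix) (bd_basis \<phi> s ix))"

text \<open>Isomorphism of quotient modules M/N \<cong> M'/N' (left modules over the same ring,
  with actions act and act'), expressed through a map on representatives inducing an
  R-linear bijection M/N \<rightarrow> M'/N'.\<close>
definition quot_iso ::
  "'a::ab_group_add set \<Rightarrow> 'a set \<Rightarrow> ('r \<Rightarrow> 'a \<Rightarrow> 'a) \<Rightarrow>
   'b::ab_group_add set \<Rightarrow> 'b set \<Rightarrow> ('r \<Rightarrow> 'b \<Rightarrow> 'b) \<Rightarrow> bool" where
  "quot_iso M N act M' N' act' \<longleftrightarrow>
     (\<exists>F. (\<forall>a\<in>M. F a \<in> M') \<and>
          (\<forall>a\<in>M. \<forall>b\<in>M. F (a + b) - (F a + F b) \<in> N') \<and>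
          (\<forall>r. \<forall>a\<in>M. F (act r a) - act' r (F a) \<in> N') \<and>
          (\<forall>a\<in>M. F a \<in> N' \<longleftrightarrow> a \<in> N) \<and>
          (\<forall>b\<in>M'. \<exists>a\<in>M. F a - b \<in> N'))"

end

theory Submission imports Defs "HOL-Library.Infinite_Set" begin

lemma sum_fun_apply': "(sum f A) x = sum (\<lambda>a. f a x) A"
  by (induct A rule: infinite_finite_induct) auto

lemma endo_zero: "alg_endo \<phi> \<Longrightarrow> \<phi> 0 = 0"
  unfolding alg_endo_def by (metis add_cancel_left_left add_0)

lemma endo_add: "alg_endo \<phi> \<Longrightarrow> \<phi> (p + q) = \<phi> p + \<phi> q"
  unfolding alg_endo_def by blast
lemma endo_mult: "alg_endo \<phi> \<Longrightarrow> \<phi> (p * q) = \<phi> p * \<phi> q"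
  unfolding alg_endo_def by blast
lemma endo_one: "alg_endo \<phi> \<Longrightarrow> \<phi> 1 = 1"
  unfolding alg_endo_def by blast
lemma endo_uminus: "alg_endo \<phi> \<Longrightarrow> \<phi> (- p) = - \<phi> p"
  by (metis endo_add endo_zero add.right_inverse add_eq_0_iff)
lemma endo_diff: "alg_endo \<phi> \<Longrightarrow> \<phi> (p - q) = \<phi> p - \<phi> q"
  by (simp add: endo_add endo_uminus diff_conv_add_uminus del: add_uminus_conv_diff)
lemma endo_sum: "alg_endo \<phi> \<Longrightarrow> \<phi> (sum g A) = sum (\<lambda>a. \<phi> (g a)) A"
  using sum_comp_morphism[of \<phi> g A] by (simp add: endo_zero endo_add o_def)
lemma endo_pow: "alg_endo \<phi> \<Longrightarrow> alg_endo (\<phi> ^^ i)"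
proof (induct i)
  case 0 then show ?case by (simp add: alg_endo_def)
next
  case (Suc i)
  then show ?case using Suc.prems unfolding alg_endo_def by simp
qed
lemma endo_neg1pow: "alg_endo \<phi> \<Longrightarrow> \<phi> ((-1) ^ n) = (-1) ^ n"
proof (induct n)
  case 0 then show ?case by (simp add: endo_one)
next
  case (Suc n)
  have "\<phi> ((-1) ^ Suc n) = \<phi> (- ((-1) ^ n))" by simp
  also have "\<dots> = - \<phi> ((-1) ^ n)" by (rule endo_uminus[OF Suc.prems])
  also have "\<dots> = - ((-1) ^ n)" by (simp only: Suc.hyps[OF Suc.prems])
  also have "\<dots> = (-1) ^ Suc n" by simp
  finally show ?case .
qed

lemma skew_lookup:
  assumes "alg_endo \<phi>"
  shows "Poly_Mapping.lookup (skew_mult \<phi> f g) k = (\<Sum>i\<le>k. Poly_Mapping.lookup f i * (\<phi> ^^ i) (Poly_Mapping.lookup g (k - i)))"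
proof -
  obtain A where A: "Poly_Mapping.keys f \<subseteq> {..<A}" using finite_nat_bounded[OF finite_keys] by blast
  obtain B where B: "Poly_Mapping.keys g \<subseteq> {..<B}" using finite_nat_bounded[OF finite_keys] by blast
  have z: "(\<Sum>i\<le>k. Poly_Mapping.lookup f i * (\<phi> ^^ i) (Poly_Mapping.lookup g (k - i))) = 0" if "k \<ge> A + B" for k
  proof (rule sum.neutral, intro ballI)
    fix i assume "i \<in> {..k}"
    show "Poly_Mapping.lookup f i * (\<phi> ^^ i) (Poly_Mapping.lookup g (k - i)) = 0"
    proof (cases "i < A")
      case True
      then have "k - i \<notin> Poly_Mapping.keys g" using B that by auto
      then show ?thesis using endo_zero[OF endo_pow[OF assms]] by (simp add: in_keys_iff)
    next
      case False
      then have "i \<notin> Poly_Mapping.keys f" using A by auto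
      then show ?thesis by (simp add: in_keys_iff)
    qed
  qed
  have "finite {k. (\<Sum>i\<le>k. Poly_Mapping.lookup f i * (\<phi> ^^ i) (Poly_Mapping.lookup g (k - i))) \<noteq> 0}"
  proof (rule finite_subset[of _ "{..<A+B}"])
    show "{k. (\<Sum>i\<le>k. Poly_Mapping.lookup f i * (\<phi> ^^ i) (Poly_Mapping.lookup g (k - i))) \<noteq> 0} \<subseteq> {..<A+B}"
    proof
      fix k assume "k \<in> {k. (\<Sum>i\<le>k. Poly_Mapping.lookup f i * (\<phi> ^^ i) (Poly_Mapping.lookup g (k - i))) \<noteq> 0}"
      then show "k \<in> {..<A+B}" using z[of k] by (cases "A + B \<le> k") auto
    qed
  qed simp
  then show ?thesis unfolding skew_mult_def by simp
qed

lemma skew_keys_bound: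
  assumes "alg_endo \<phi>" "Poly_Mapping.keys f \<subseteq> {..<N}" "Poly_Mapping.keys g \<subseteq> {..<N}"
  shows "Poly_Mapping.keys (skew_mult \<phi> f g) \<subseteq> {..<2*N}"
proof
  fix k assume k: "k \<in> Poly_Mapping.keys (skew_mult \<phi> f g)"
  show "k \<in> {..<2*N}"
  proof (rule ccontr)
    assume "k \<notin> {..<2*N}"
    then have kk: "k \<ge> 2*N" by auto
    have "(\<Sum>i\<le>k. Poly_Mapping.lookup f i * (\<phi> ^^ i) (Poly_Mapping.lookup g (k - i))) = 0"
    proof (rule sum.neutral, intro ballI)
      fix i assume "i \<in> {..k}"
      show "Poly_Mapping.lookup f i * (\<phi> ^^ i) (Poly_Mapping.lookup g (k - i)) = 0"
      proof (cases "i < N")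
        case True
        then have "k - i \<notin> Poly_Mapping.keys g" using assms(3) kk by auto
        then show ?thesis using endo_zero[OF endo_pow[OF assms(1)]] by (simp add: in_keys_iff)
      next
        case False
        then have "i \<notin> Poly_Mapping.keys f" using assms(2) by auto
        then show ?thesis by (simp add: in_keys_iff)
      qed
    qed
    then show False using k by (simp add: in_keys_iff skew_lookup[OF assms(1)])
  qed
qed

lemma S_act_bound:
  assumes "Poly_Mapping.keys r \<subseteq> {..<N}"
  shows "S_act \<phi> r p = (\<Sum>i<N. Poly_Mapping.lookup r i * (\<phi> ^^ i) p)"
  unfolding S_act_def
  by (rule sum.mono_neutral_left) (use assms in \<open>auto simp: in_keys_iff\<close>)


lemma keys_bound: "\<exists>N. Poly_Mapping.keys (r::nat \<Rightarrow>\<^sub>0 'a::zero) \<subseteq> {..<N}"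
  using finite_nat_bounded finite_keys by blast

lemma keys_bound_mono: "Poly_Mapping.keys (r :: nat \<Rightarrow>\<^sub>0 'a::zero) \<subseteq> {..<N} \<Longrightarrow> N \<le> M \<Longrightarrow> Poly_Mapping.keys r \<subseteq> {..<M}"
  by (erule order_trans, rule subsetI) simp

lemma S_act_add: "S_act \<phi> (r + r') p = S_act \<phi> r p + S_act \<phi> r' p"
proof -
  obtain A B where A: "Poly_Mapping.keys r \<subseteq> {..<A}" and B: "Poly_Mapping.keys r' \<subseteq> {..<B}"
    using keys_bound by blast
  have C: "Poly_Mapping.keys (r + r') \<subseteq> {..<A+B}"
  proof
    fix x assume "x \<in> Poly_Mapping.keys (r + r')"
    then have "x \<in> Poly_Mapping.keys r \<or> x \<in> Poly_Mapping.keys r'"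
      by (auto simp: in_keys_iff lookup_add)
    then show "x \<in> {..<A+B}" using A B by auto
  qed
  show ?thesis
    using S_act_bound[OF C] S_act_bound[OF keys_bound_mono[OF A, of "A+B"]]
      S_act_bound[OF keys_bound_mono[OF B, of "A+B"]]
    by (simp add: lookup_add distrib_right sum.distrib)
qed

lemma S_act_diff: "S_act \<phi> (r - r') p = S_act \<phi> r p - S_act \<phi> r' p"
proof -
  obtain A B where A: "Poly_Mapping.keys r \<subseteq> {..<A}" and B: "Poly_Mapping.keys r' \<subseteq> {..<B}"
    using keys_bound by blast
  have C: "Poly_Mapping.keys (r - r') \<subseteq> {..<A+B}"
  proof
    fix x assume "x \<in> Poly_Mapping.keys (r - r')"
    then have "x \<in> Poly_Mapping.keys r \<or> x \<in> Poly_Mapping.keys r'"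
      by (auto simp: in_keys_iff lookup_minus)
    then show "x \<in> {..<A+B}" using A B by auto
  qed
  show ?thesis
    using S_act_bound[OF C] S_act_bound[OF keys_bound_mono[OF A, of "A+B"]]
      S_act_bound[OF keys_bound_mono[OF B, of "A+B"]]
    by (simp add: lookup_minus left_diff_distrib sum_subtractf)
qed

lemma S_act_zero: "S_act \<phi> 0 p = 0"
  by (simp add: S_act_def)

lemma S_act_sum: "S_act \<phi> (sum f A) p = (\<Sum>a\<in>A. S_act \<phi> (f a) p)"
  by (induct A rule: infinite_finite_induct) (auto simp: S_act_zero S_act_add)

lemma S_act_const: "S_act \<phi> (skew_const a) p = a * p"
proof -
  have "Poly_Mapping.keys (skew_const a) \<subseteq> {..<1}" by (auto simp: skew_const_def)
  from S_act_bound[OF this] show ?thesis by (simp add: skew_const_def)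
qed

lemma S_act_Theta:
  fixes \<phi> :: "('v, 'k::comm_ring_1) mpoly \<Rightarrow> ('v, 'k) mpoly"
  shows "S_act \<phi> Theta p = \<phi> p"
proof -
  have "Poly_Mapping.keys (Theta :: ('v, 'k) skew) \<subseteq> {..<2}" by (auto simp: Theta_def)
  from S_act_bound[OF this] show ?thesis by (simp add: Theta_def lookup_single numeral_2_eq_2)
qed

lemma S_act_mult:
  assumes e: "alg_endo \<phi>"
  shows "S_act \<phi> (skew_mult \<phi> r g) p = S_act \<phi> r (S_act \<phi> g p)"
proof -
  obtain A B where A: "Poly_Mapping.keys r \<subseteq> {..<A}" and B: "Poly_Mapping.keys g \<subseteq> {..<B}"
    using keys_bound by blast
  define N where "N = A + B"
  have rN: "Poly_Mapping.keys r \<subseteq> {..<N}" using A N_def by auto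
  have gN: "Poly_Mapping.keys g \<subseteq> {..<N}" using B N_def by auto
  have K: "Poly_Mapping.keys (skew_mult \<phi> r g) \<subseteq> {..<2*N}" by (rule skew_keys_bound[OF e rN gN])
  define h where "h i j = Poly_Mapping.lookup r i * (\<phi>^^i) (Poly_Mapping.lookup g j) * (\<phi>^^(i+j)) p" for i j
  have "S_act \<phi> (skew_mult \<phi> r g) p =
      (\<Sum>k<2*N. (\<Sum>i\<le>k. Poly_Mapping.lookup r i * (\<phi>^^i) (Poly_Mapping.lookup g (k - i))) * (\<phi>^^k) p)"
    by (simp add: S_act_bound[OF K] skew_lookup[OF e])
  also have "\<dots> = (\<Sum>k<2*N. \<Sum>i\<le>k. h i (k - i))"
    by (rule sum.cong[OF refl]) (auto simp: sum_distrib_right h_def intro!: sum.cong)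
  also have "\<dots> = (\<Sum>(i,j)\<in>{(i,j). i+j < 2*N}. h i j)"
    by (rule sum.triangle_reindex[symmetric])
  also have "\<dots> = (\<Sum>(i,j)\<in>{..<N}\<times>{..<N}. h i j)"
  proof (rule sum.mono_neutral_right)
    show "finite {(i, j). i + j < 2 * N}"
      by (rule finite_subset[of _ "{..<2*N}\<times>{..<2*N}"]) auto
    show "{..<N} \<times> {..<N} \<subseteq> {(i, j). i + j < 2 * N}" by auto
    have zero: "h i j = 0" if "(i, j) \<notin> {..<N} \<times> {..<N}" for i j
    proof -
      have "i \<notin> Poly_Mapping.keys r \<or> j \<notin> Poly_Mapping.keys g" using that rN gN by auto
      then show "h i j = 0" unfolding h_def
        using endo_zero[OF endo_pow[OF e]] by (auto simp: in_keys_iff)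
    qed
    then show "\<forall>x\<in>{(i, j). i + j < 2 * N} - {..<N} \<times> {..<N}. (case x of (i, j) \<Rightarrow> h i j) = 0"
      by auto
  qed
  also have "\<dots> = (\<Sum>i<N. \<Sum>j<N. h i j)"
    by (rule sum.cartesian_product[symmetric])
  also have "\<dots> = (\<Sum>i<N. Poly_Mapping.lookup r i * (\<phi>^^i) (\<Sum>j<N. Poly_Mapping.lookup g j * (\<phi>^^j) p))"
    by (simp add: endo_sum[OF endo_pow[OF e]] endo_mult[OF endo_pow[OF e]] sum_distrib_left h_def
          funpow_add mult.assoc)
  also have "\<dots> = S_act \<phi> r (S_act \<phi> g p)"
    by (simp add: S_act_bound[OF rN] S_act_bound[OF gN])
  finally show ?thesis .
qed

lemma skew_const_left:
  assumes e: "alg_endo \<phi>"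
  shows "Poly_Mapping.lookup (skew_mult \<phi> (skew_const a) g) k = a * Poly_Mapping.lookup g k"
proof -
  have "Poly_Mapping.lookup (skew_mult \<phi> (skew_const a) g) k
     = (\<Sum>i\<le>k. (if 0 = i then a * Poly_Mapping.lookup g k else 0))"
    unfolding skew_lookup[OF e]
    by (rule sum.cong[OF refl]) (auto simp: skew_const_def lookup_single when_def)
  then show ?thesis by simp
qed

lemma endo_pow_ind: "alg_endo \<phi> \<Longrightarrow> (\<phi>^^i) (if P then 1 else 0) = (if P then 1 else 0)"
  using endo_one[OF endo_pow] endo_zero[OF endo_pow] by auto

lemma skew_const1_right:
  assumes e: "alg_endo \<phi>"
  shows "skew_mult \<phi> r (skew_const 1) = r"
proof (rule poly_mapping_eqI)
  fix k
  have "Poly_Mapping.lookup (skew_mult \<phi> r (skew_const 1)) k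
     = (\<Sum>i\<le>k. (if i = k then Poly_Mapping.lookup r i else 0))"
    unfolding skew_lookup[OF e]
    by (rule sum.cong[OF refl]) (auto simp: skew_const_def lookup_single lookup_one when_def endo_one[OF endo_pow[OF e]]
        endo_zero[OF endo_pow[OF e]] split: if_splits)
  then show "Poly_Mapping.lookup (skew_mult \<phi> r (skew_const 1)) k = Poly_Mapping.lookup r k" by simp
qed

lemma skew_const1_left:
  assumes e: "alg_endo \<phi>"
  shows "skew_mult \<phi> (skew_const 1) r = r"
  by (rule poly_mapping_eqI) (simp add: skew_const_left[OF e])

lemma skew_const_const:
  assumes e: "alg_endo \<phi>"
  shows "skew_mult \<phi> (skew_const a) (skew_const b) = skew_const (a * b)"
  by (rule poly_mapping_eqI) (simp only: skew_const_left[OF e], simp add: skew_const_def lookup_single when_def)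

lemma skew_zero_left:
  assumes e: "alg_endo \<phi>"
  shows "skew_mult \<phi> 0 r = 0"
  by (rule poly_mapping_eqI) (simp add: skew_lookup[OF e])

lemma skew_zero_right:
  assumes e: "alg_endo \<phi>"
  shows "skew_mult \<phi> r 0 = 0"
  by (rule poly_mapping_eqI) (simp add: skew_lookup[OF e] endo_zero[OF endo_pow[OF e]])


lemma lookup_Theta_m1: "Poly_Mapping.lookup (Theta - skew_const c) m = (if m = 1 then 1 else 0) - (if m = 0 then c else 0)"
  by (simp add: Theta_def skew_const_def lookup_minus lookup_single when_def)

lemma telescope:
  assumes e: "alg_endo \<phi>" and gN: "Poly_Mapping.keys g \<subseteq> {..<N}"
  shows "\<exists>q. skew_mult \<phi> q (Theta - skew_const 1) = g - skew_const (S_act \<phi> g 1)"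
proof -
  define f where "f k = (\<Sum>j\<in>{k<..<N}. Poly_Mapping.lookup g j)" for k
  have fin: "finite {k. f k \<noteq> 0}"
  proof (rule finite_subset[of _ "{..<N}"])
    show "{k. f k \<noteq> 0} \<subseteq> {..<N}"
    proof
      fix x assume "x \<in> {k. f k \<noteq> 0}"
      then show "x \<in> {..<N}" by (cases "x < N") (auto simp: f_def)
    qed
  qed simp
  define q where "q = Abs_poly_mapping f"
  have lq: "Poly_Mapping.lookup q = f" using fin q_def by simp
  have gz: "Poly_Mapping.lookup g j = 0" if "j \<ge> N" for j
    using gN that by (auto simp: in_keys_iff)
  have Sg: "S_act \<phi> g 1 = (\<Sum>j<N. Poly_Mapping.lookup g j)"
    by (simp add: S_act_bound[OF gN] endo_one[OF endo_pow[OF e]])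
  have phi_ind: "(\<phi>^^i) ((if P then 1 else 0) - (if Q then 1 else 0)) = (if P then 1 else 0) - (if Q then 1 else 0)" for i P Q
    by (simp add: endo_diff[OF endo_pow[OF e]] endo_pow_ind[OF e])
  show ?thesis
  proof (rule exI[of _ q], rule poly_mapping_eqI)
    fix k
    show "Poly_Mapping.lookup (skew_mult \<phi> q (Theta - skew_const 1)) k =
          Poly_Mapping.lookup (g - skew_const (S_act \<phi> g 1)) k"
    proof (cases k)
      case 0
      have "(\<Sum>j<N. Poly_Mapping.lookup g j) = Poly_Mapping.lookup g 0 + f 0"
      proof (cases N)
        case 0 then show ?thesis using gz by (simp add: f_def)
      next
        case (Suc M)
        then have "{..<N} = insert 0 {0<..<N}" by auto
        then show ?thesis by (simp add: f_def)
      qed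
      then show ?thesis using 0
        by (simp add: skew_lookup[OF e] lq lookup_minus Sg skew_const_def Theta_def lookup_single when_def)
    next
      case (Suc m)
      have A: "(\<Sum>i\<le>m. f i * (\<phi> ^^ i) (Poly_Mapping.lookup (Theta - skew_const 1) (Suc m - i)))
            = (\<Sum>i\<le>m. if i = m then f i else 0)"
        by (rule sum.cong[OF refl]) (auto simp: lookup_Theta_m1 endo_one[OF endo_pow[OF e]] endo_zero[OF endo_pow[OF e]])
      have B: "f m = Poly_Mapping.lookup g (Suc m) + f (Suc m)"
      proof (cases "Suc m < N")
        case True
        then have "{m<..<N} = insert (Suc m) {Suc m<..<N}" by auto
        then show ?thesis by (simp add: f_def)
      next
        case False
        then show ?thesis using gz by (simp add: f_def)
      qed
      have "Poly_Mapping.lookup (skew_mult \<phi> q (Theta - skew_const 1)) (Suc m)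
          = (\<Sum>i\<le>Suc m. f i * (\<phi> ^^ i) (Poly_Mapping.lookup (Theta - skew_const 1) (Suc m - i)))"
        by (simp only: skew_lookup[OF e] lq)
      also have "\<dots> = (\<Sum>i\<le>m. f i * (\<phi> ^^ i) (Poly_Mapping.lookup (Theta - skew_const 1) (Suc m - i)))
          + f (Suc m) * (\<phi> ^^ Suc m) (Poly_Mapping.lookup (Theta - skew_const 1) (Suc m - Suc m))"
        by (rule sum.atMost_Suc)
      also have "\<dots> = f m - f (Suc m)"
        unfolding A by (simp only: diff_self_eq_0 lookup_Theta_m1 phi_ind) simp
      also have "\<dots> = Poly_Mapping.lookup (g - skew_const (S_act \<phi> g 1)) (Suc m)"
        by (simp add: B lookup_minus skew_const_def lookup_single)
      finally show ?thesis using Suc by simp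
    qed
  qed
qed


lemma bd_apply: "bd \<phi> s c jx = (\<Sum>ix\<in>UNIV. skew_mult \<phi> (c ix) (bd_basis \<phi> s ix jx))"
  by (simp add: bd_def sum_fun_apply' chain_smul_def)

lemma chain_smul_basis:
  assumes e: "alg_endo \<phi>"
  shows "chain_smul \<phi> r (basis_vec ix) jx = (if jx = ix then r else 0)"
  by (simp add: chain_smul_def basis_vec_def skew_const1_right[OF e] skew_zero_right[OF e])

lemma bd_basis_single:
  assumes e: "alg_endo \<phi>"
  shows "bd_basis \<phi> s ({v}, False) jx = (if jx = ({}, False) then skew_const (Var v) else 0)"
proof -
  have E: "{j. j = v \<and> j < v} = {}" by auto
  show ?thesis by (simp add: bd_basis_def chain_smul_basis[OF e] sgn_pos_def E)
qed

lemma bd_basis_u: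
  assumes e: "alg_endo \<phi>"
  shows "bd_basis \<phi> s ({}, True) jx = (if jx = ({}, False) then Theta - skew_const 1 else 0)"
  by (simp add: bd_basis_def chain_smul_basis[OF e] s_prod_def skew_const1_left[OF e])

lemma bd_basis_top:
  fixes \<phi> :: "('v::{finite,linorder}, 'k::comm_ring_1) mpoly \<Rightarrow> ('v, 'k) mpoly"
  assumes e: "alg_endo \<phi>"
  shows "bd_basis \<phi> s (UNIV, True) (UNIV, False) =
     skew_mult \<phi> (skew_const ((-1) ^ card (UNIV :: 'v set))) (Theta - skew_const (s_prod s UNIV))"
  by (simp add: bd_basis_def chain_smul_basis[OF e] sum_fun_apply')

lemma bdeg1:
  assumes "bdeg (ix :: 'v::finite set \<times> bool) = 1"
  shows "ix \<in> range (\<lambda>v. ({v}, False)) \<union> {({}, True)}"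
proof (cases ix)
  case (Pair J b)
  show ?thesis
  proof (cases b)
    case True
    then have "card J = 0" using assms Pair by (simp add: bdeg_def)
    then have "J = {}" by simp
    then show ?thesis using Pair True by simp
  next
    case False
    then have "card J = 1" using assms Pair by (simp add: bdeg_def)
    then obtain v where "J = {v}" by (auto simp: card_Suc_eq)
    then show ?thesis using Pair False by simp
  qed
qed

lemma bd_FK1:
  fixes \<phi> :: "('v::{finite,linorder}, 'k::comm_ring_1) mpoly \<Rightarrow> ('v, 'k) mpoly"
  assumes e: "alg_endo \<phi>" and c: "c \<in> FK 1"
  shows "bd \<phi> s c jx = (if jx = ({}, False) then
     (\<Sum>v\<in>UNIV. skew_mult \<phi> (c ({v}, False)) (skew_const (Var v)))
      + skew_mult \<phi> (c ({}, True)) (Theta - skew_const 1) else 0)"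
proof -
  define T where "T = range (\<lambda>v::'v. ({v}, False)) \<union> {({}, True)}"
  have sub: "c ix = 0" if "ix \<notin> T" for ix
    using c bdeg1[of ix] that unfolding FK_def T_def by blast
  have "bd \<phi> s c jx = (\<Sum>ix\<in>T. skew_mult \<phi> (c ix) (bd_basis \<phi> s ix jx))"
    unfolding bd_apply
    by (rule sum.mono_neutral_right) (auto simp: sub skew_zero_left[OF e])
  also have "\<dots> = (\<Sum>ix\<in>range (\<lambda>v::'v. ({v}, False)). skew_mult \<phi> (c ix) (bd_basis \<phi> s ix jx))
      + skew_mult \<phi> (c ({}, True)) (bd_basis \<phi> s ({}, True) jx)"
    unfolding T_def by (subst sum.union_disjoint) auto
  also have "(\<Sum>ix\<in>range (\<lambda>v::'v. ({v}, False)). skew_mult \<phi> (c ix) (bd_basis \<phi> s ix jx))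
      = (\<Sum>v\<in>UNIV. skew_mult \<phi> (c ({v}, False)) (bd_basis \<phi> s ({v}, False) jx))"
    by (subst sum.reindex) (auto simp: inj_on_def)
  finally show ?thesis
    by (simp add: bd_basis_single[OF e] bd_basis_u[OF e] skew_zero_right[OF e])
qed


lemma var_pow:
  assumes e: "alg_endo \<phi>" and hv: "\<And>v. \<phi> (Var v) = s v * Var v"
  shows "\<exists>u. (\<phi>^^i) (Var v) = u * Var v"
proof (induct i)
  case 0 show ?case by (rule exI[of _ 1]) simp
next
  case (Suc i)
  then obtain u where "(\<phi>^^i) (Var v) = u * Var v" by blast
  then have "(\<phi>^^Suc i) (Var v) = (\<phi> u * s v) * Var v" by (simp add: endo_mult[OF e] hv mult.assoc)
  then show ?case by blast
qed

lemma S_act_var: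
  assumes e: "alg_endo \<phi>" and hv: "\<And>v. \<phi> (Var v) = s v * Var v"
  shows "\<exists>t. S_act \<phi> c (Var v) = t * Var v"
proof -
  have "\<forall>i. \<exists>u. (\<phi>^^i) (Var v) = u * Var v" using var_pow[OF e hv] by blast
  then obtain U where U0: "\<forall>i. (\<phi>^^i) (Var v) = U i * Var v" by (rule choice[THEN exE])
  then have U: "\<And>i. (\<phi>^^i) (Var v) = U i * Var v" by blast
  have "S_act \<phi> c (Var v) = (\<Sum>i\<in>Poly_Mapping.keys c. Poly_Mapping.lookup c i * U i) * Var v"
    by (simp add: S_act_def U sum_distrib_right mult.assoc)
  then show ?thesis by blast
qed

lemma S_act_at0: "alg_endo \<phi> \<Longrightarrow> S_act \<phi> r 0 = 0"
  by (simp add: S_act_def endo_zero[OF endo_pow])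

lemma skew_const_sum: "(\<Sum>v\<in>A. skew_const (f v)) = skew_const (sum f A)"
  by (induct A rule: infinite_finite_induct) (auto simp: skew_const_def single_add)

lemma zero_var_ideal: "0 \<in> var_ideal"
  unfolding var_ideal_def by (rule CollectI, rule exI[of _ "\<lambda>_. 0"]) simp

lemma FK0_form:
  fixes a :: "('v::finite, 'k::comm_ring_1) chain"
  assumes "a \<in> FK 0"
  shows "a = (\<lambda>jx. if jx = ({}, False) then a ({}, False) else 0)"
proof
  fix jx :: "'v set \<times> bool"
  show "a jx = (if jx = ({}, False) then a ({}, False) else 0)"
  proof (cases "a jx = 0")
    case False
    then have "bdeg jx = 0" using assms unfolding FK_def by blast
    then have "jx = ({}, False)" by (cases jx) (auto simp: bdeg_def split: if_splits)
    then show ?thesis by simp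
  qed auto
qed

theorem part1:
  fixes \<phi> :: "('v::{finite,linorder}, 'k::comm_ring_1) mpoly \<Rightarrow> ('v, 'k) mpoly"
    and s :: "'v \<Rightarrow> ('v, 'k) mpoly"
  assumes e: "alg_endo \<phi>"
    and hv: "\<And>v. \<phi> (Var v) = s v * Var v"
  shows "quot_iso (FK 0) (bd \<phi> s ` FK 1) (chain_smul \<phi>) UNIV var_ideal (S_act \<phi>)"
  unfolding quot_iso_def
proof (intro exI[of _ "\<lambda>a. S_act \<phi> (a ({}, False)) 1"] conjI ballI allI)
  fix a b :: "('v, 'k) chain"
  show "S_act \<phi> ((a + b) ({}, False)) 1 - (S_act \<phi> (a ({}, False)) 1 + S_act \<phi> (b ({}, False)) 1) \<in> var_ideal"
    by (simp add: S_act_add zero_var_ideal)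
next
  fix r and a :: "('v, 'k) chain"
  show "S_act \<phi> (chain_smul \<phi> r a ({}, False)) 1 - S_act \<phi> r (S_act \<phi> (a ({}, False)) 1) \<in> var_ideal"
    by (simp add: chain_smul_def S_act_mult[OF e] zero_var_ideal)
next
  fix p :: "('v, 'k) mpoly"
  let ?a = "(\<lambda>jx. if jx = ({}, False) then skew_const p else 0) :: ('v, 'k) chain"
  have "?a \<in> FK 0" by (simp add: FK_def bdeg_def)
  moreover have "S_act \<phi> (?a ({}, False)) 1 - p \<in> var_ideal"
    by (simp add: S_act_const zero_var_ideal)
  ultimately show "\<exists>a\<in>FK 0. S_act \<phi> (a ({}, False)) 1 - p \<in> var_ideal" by (intro bexI[of _ ?a]) simp_all
next
  fix a :: "('v, 'k) chain"
  assume a: "a \<in> FK 0"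
  define g where "g = a ({}, False)"
  have aform: "a = (\<lambda>jx. if jx = ({}, False) then g else 0)"
    unfolding g_def by (rule FK0_form[OF a])
  show "(S_act \<phi> (a ({}, False)) 1 \<in> var_ideal) = (a \<in> bd \<phi> s ` FK 1)"
  proof
    assume "S_act \<phi> (a ({}, False)) 1 \<in> var_ideal"
    then obtain b where Sb: "S_act \<phi> g 1 = (\<Sum>v\<in>UNIV. b v * Var v)"
      unfolding var_ideal_def g_def by blast
    obtain N where gN: "Poly_Mapping.keys g \<subseteq> {..<N}" using keys_bound by blast
    obtain q where q: "skew_mult \<phi> q (Theta - skew_const 1) = g - skew_const (S_act \<phi> g 1)"
      using telescope[OF e gN] by blast
    define c where "c ix = (if snd ix then (if fst ix = {} then q else 0)
        else (if card (fst ix) = 1 then skew_const (b (the_elem (fst ix))) else 0))"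
      for ix :: "'v set \<times> bool"
    have cF: "c \<in> FK 1" by (auto simp: FK_def bdeg_def c_def)
    have "bd \<phi> s c = a"
    proof
      fix jx
      have "(\<Sum>v\<in>UNIV. skew_mult \<phi> (c ({v}, False)) (skew_const (Var v)))
           = skew_const (S_act \<phi> g 1)"
        by (simp add: c_def skew_const_const[OF e] skew_const_sum Sb)
      moreover have "c ({}, True) = q" by (simp add: c_def)
      ultimately show "bd \<phi> s c jx = a jx"
        by (subst aform) (simp add: bd_FK1[OF e cF] q)
    qed
    with cF show "a \<in> bd \<phi> s ` FK 1" by blast
  next
    assume "a \<in> bd \<phi> s ` FK 1"
    then obtain c where cF: "c \<in> FK 1" and ac: "a = bd \<phi> s c" by blast
    have gc: "g = (\<Sum>v\<in>UNIV. skew_mult \<phi> (c ({v}, False)) (skew_const (Var v)))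
      + skew_mult \<phi> (c ({}, True)) (Theta - skew_const 1)"
      using g_def ac bd_FK1[OF e cF] by simp
    have "\<forall>v. \<exists>t. S_act \<phi> (c ({v}, False)) (Var v) = t * Var v"
      using S_act_var[OF e hv] by blast
    then obtain t where t0: "\<forall>v. S_act \<phi> (c ({v}, False)) (Var v) = t v * Var v"
      by (rule choice[THEN exE])
    then have t: "\<And>v. S_act \<phi> (c ({v}, False)) (Var v) = t v * Var v" by blast
    have "S_act \<phi> g 1 = (\<Sum>v\<in>UNIV. t v * Var v)"
      by (simp add: gc S_act_add S_act_sum S_act_mult[OF e] S_act_const S_act_diff S_act_Theta
          endo_one[OF e] S_act_at0[OF e] t)
    then show "S_act \<phi> (a ({}, False)) 1 \<in> var_ideal"
      unfolding var_ideal_def g_def by blast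
  qed
qed simp



lemma neg1_sq: "(-1::'a::comm_ring_1) ^ n * (-1) ^ n = 1"
  by (simp flip: power_add)

theorem part2:
  fixes \<phi> :: "('v::{finite,linorder}, 'k::comm_ring_1) mpoly \<Rightarrow> ('v, 'k) mpoly"
    and s :: "'v \<Rightarrow> ('v, 'k) mpoly"
  assumes e: "alg_endo \<phi>"
  shows "\<forall>c\<in>FK (card (UNIV :: 'v set) + 1). bd \<phi> s c = 0 \<longrightarrow> c = 0"
proof (intro ballI impI)
  fix c :: "('v, 'k) chain"
  assume cF: "c \<in> FK (card (UNIV :: 'v set) + 1)" and bd0: "bd \<phi> s c = 0"
  have supp: "ix = (UNIV, True)" if "c ix \<noteq> 0" for ix
  proof -
    have bd: "bdeg ix = card (UNIV :: 'v set) + 1" using cF that unfolding FK_def by blast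
    obtain J b where ix: "ix = (J, b)" by (cases ix)
    have le: "card J \<le> card (UNIV :: 'v set)" by (rule card_mono) auto
    show ?thesis
    proof (cases b)
      case True
      then have "card J = card (UNIV :: 'v set)" using bd ix by (simp add: bdeg_def)
      then have "J = UNIV" by (metis card_subset_eq finite_UNIV subset_UNIV)
      then show ?thesis using ix True by simp
    next
      case False
      then show ?thesis using bd ix le by (simp add: bdeg_def)
    qed
  qed
  define c0 where "c0 = c (UNIV, True)"
  define \<epsilon> where "\<epsilon> = ((-1) ^ card (UNIV :: 'v set) :: ('v, 'k) mpoly)"
  define h where "h = bd_basis \<phi> s (UNIV, True) (UNIV, False)"
  have hl: "Poly_Mapping.lookup h m = \<epsilon> * ((if m = 1 then 1 else 0) - (if m = 0 then s_prod s UNIV else 0))" for m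
    by (simp add: h_def bd_basis_top[OF e] skew_const_left[OF e] lookup_Theta_m1 \<epsilon>_def)
  have "bd \<phi> s c (UNIV, False) = (\<Sum>ix\<in>{(UNIV, True)}. skew_mult \<phi> (c ix) (bd_basis \<phi> s ix (UNIV, False)))"
    unfolding bd_apply
  proof (rule sum.mono_neutral_right)
    show "\<forall>ix\<in>UNIV - {(UNIV, True)}. skew_mult \<phi> (c ix) (bd_basis \<phi> s ix (UNIV, False)) = 0"
    proof
      fix ix assume "ix \<in> UNIV - {(UNIV :: 'v set, True)}"
      then have "c ix = 0" using supp by blast
      then show "skew_mult \<phi> (c ix) (bd_basis \<phi> s ix (UNIV, False)) = 0"
        by (simp add: skew_zero_left[OF e])
    qed
  qed auto
  then have bdc: "bd \<phi> s c (UNIV, False) = skew_mult \<phi> c0 h" by (simp add: c0_def h_def)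
  have c00: "c0 = 0"
  proof (rule ccontr)
    assume nz: "c0 \<noteq> 0"
    then have kne: "Poly_Mapping.keys c0 \<noteq> {}" by simp
    define d where "d = Max (Poly_Mapping.keys c0)"
    have dk: "d \<in> Poly_Mapping.keys c0" using kne d_def by simp
    have gt: "Poly_Mapping.lookup c0 i = 0" if "i > d" for i
      using that d_def by (metis Max_ge finite_keys in_keys_iff not_le)
    have "Poly_Mapping.lookup (skew_mult \<phi> c0 h) (Suc d)
       = (\<Sum>i\<le>Suc d. if i = d then Poly_Mapping.lookup c0 d * \<epsilon> else 0)"
      unfolding skew_lookup[OF e]
    proof (rule sum.cong[OF refl])
      fix i assume i: "i \<in> {..Suc d}"
      show "Poly_Mapping.lookup c0 i * (\<phi> ^^ i) (Poly_Mapping.lookup h (Suc d - i))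
          = (if i = d then Poly_Mapping.lookup c0 d * \<epsilon> else 0)"
      proof (cases "i = d")
        case True
        then show ?thesis by (simp add: hl \<epsilon>_def endo_neg1pow[OF endo_pow[OF e]])
      next
        case False
        show ?thesis
        proof (cases "i = Suc d")
          case True then show ?thesis using gt False by simp
        next
          case False
          then have "Suc d - i \<noteq> 1" "Suc d - i \<noteq> 0" using i \<open>i \<noteq> d\<close> by auto
          then show ?thesis using \<open>i \<noteq> d\<close> by (simp add: hl endo_zero[OF endo_pow[OF e]])
        qed
      qed
    qed
    also have "\<dots> = Poly_Mapping.lookup c0 d * \<epsilon>" by simp
    finally have L: "Poly_Mapping.lookup (skew_mult \<phi> c0 h) (Suc d) = Poly_Mapping.lookup c0 d * \<epsilon>" .
    have "Poly_Mapping.lookup c0 d * \<epsilon> \<noteq> 0"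
    proof
      assume "Poly_Mapping.lookup c0 d * \<epsilon> = 0"
      then have "Poly_Mapping.lookup c0 d * \<epsilon> * \<epsilon> = 0" by simp
      then have "Poly_Mapping.lookup c0 d = 0" by (simp add: mult.assoc \<epsilon>_def neg1_sq)
      then show False using dk by (simp add: in_keys_iff)
    qed
    moreover have "skew_mult \<phi> c0 h = 0" using bdc bd0 by simp
    ultimately show False using L by simp
  qed
  show "c = 0"
  proof
    fix ix show "c ix = 0 ix" using supp[of ix] c00 c0_def by (cases "ix = (UNIV, True)") auto
  qed
qed

theorem proposition3:
  fixes \<phi> :: "('v::{finite,linorder}, 'k::comm_ring_1) mpoly \<Rightarrow> ('v, 'k) mpoly"
    and s :: "'v \<Rightarrow> ('v, 'k) mpoly"
  assumes "alg_endo \<phi>"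
    and "flat_endo \<phi>"
    and "\<And>v. s v \<noteq> 0"
    and "\<And>v. \<phi> (Var v) = s v * Var v"
  shows "quot_iso (FK 0) (bd \<phi> s ` FK 1) (chain_smul \<phi>) UNIV var_ideal (S_act \<phi>)
         \<and> (\<forall>c\<in>FK (card (UNIV :: 'v set) + 1). bd \<phi> s c = 0 \<longrightarrow> c = 0)"
  by (rule conjI[OF part1[OF assms(1,4)] part2[OF assms(1)]])

end
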